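(* Let $\Omega_{1/2}=\{\operatorname{Re}(s)>\tfrac12\}\setminus[\tfrac12,1]$. The following are equivalent: (1) $\eta_1(s)$ extends to an analytic function on $\Omega_{1/2}$; (2) $\eta_1(s)$ extends to a meromorphic function on $\Omega_{1/2}$; (3) $\zeta(s)$ has no zeros in $\Omega_{1/2}$; (4) for some integer $i\ge2$ (equivalently, for all integers $i\ge1$), $\zeta_i(s)$ extends to an analytic function on $\Omega_{1/2}$ with no zeros in $\Omega_{1/2}$; (5) for some integer $n\ge1$ (equivalently, for all integers $n\ge1$), $\eta_1(s)^n$ extends to a meromorphic function on $\Omega_{1/2}$.
   Context: Let $p_1=2<p_2=3<\dots$ be the primes in increasing order, $\mathbb{P}$ the set of primes. $\eta_1(s)=\sum_{p\in\mathbb{P}}p^{-s}$ for $\operatorname{Re}(s)>1$. For $k\ge1$, $M_k=\{p_{1+jk}:j\ge0\}$ and $\zeta_k(s)=\prod_{p\in M_k}(1-p^{-s})^{-1}$ for $\operatorname{Re}(s)>1$. Extension to $\Omega_{1/2}$ means agreement with the given function on $\{\operatorname{Re}(s)>1\}$. *)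

theory Defs
  imports "HOL-Complex_Analysis.Complex_Analysis" "HOL-Computational_Algebra.Primes"
    "HOL-Library.Infinite_Set"
begin

text \<open>The j-th prime, 0-indexed: pr 0 = 2, pr 1 = 3, ...  (so p_{m} = pr (m - 1)).\<close>
definition pr :: "nat \<Rightarrow> nat" where
  "pr j = enumerate {p::nat. prime p} j"

definition M :: "nat \<Rightarrow> nat set" where
  "M k = {pr (j * k) | j. True}"

text \<open>eta_1(s) = sum over primes p of p^(-s)  (meaningful for Re s > 1)\<close>
definition eta1 :: "complex \<Rightarrow> complex" where
  "eta1 s = (\<Sum>\<^sub>\<infinity>p\<in>{p::nat. prime p}. (of_nat p :: complex) powr (- s))"

definition zetak :: "nat \<Rightarrow> complex \<Rightarrow> complex" where
  "zetak k s = (\<Prod>j. inverse (1 - (of_nat (pr (j * k)) :: complex) powr (- s)))"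

definition zeta :: "complex \<Rightarrow> complex" where
  "zeta s = (\<Sum>n. (of_nat (Suc n) :: complex) powr (- s))"

definition Omega_half :: "complex set" where
  "Omega_half = {s. Re s > 1/2} - {complex_of_real x | x. 1/2 \<le> x \<and> x \<le> 1}"

definition extends_analytic :: "(complex \<Rightarrow> complex) \<Rightarrow> complex set \<Rightarrow> bool" where
  "extends_analytic F A \<longleftrightarrow> (\<exists>g. g holomorphic_on A \<and> (\<forall>s. Re s > 1 \<longrightarrow> g s = F s))"

definition extends_meromorphic :: "(complex \<Rightarrow> complex) \<Rightarrow> complex set \<Rightarrow> bool" where
  "extends_meromorphic F A \<longleftrightarrow> (\<exists>g. g meromorphic_on A \<and> (\<forall>s. Re s > 1 \<longrightarrow> g s = F s))"

definition extends_analytic_nonzero :: "(complex \<Rightarrow> complex) \<Rightarrow> complex set \<Rightarrow> bool" where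
  "extends_analytic_nonzero F A \<longleftrightarrow>
     (\<exists>g. g holomorphic_on A \<and> (\<forall>s. Re s > 1 \<longrightarrow> g s = F s) \<and> (\<forall>s\<in>A. g s \<noteq> 0))"

end

theory Submission
  imports Defs
begin


lemma pr_prime: "prime (pr j)"
  using enumerate_in_set[OF primes_infinite, of j] by (simp add: pr_def)

lemma pr_smono: "strict_mono pr"
  unfolding pr_def by (intro strict_mono_enumerate primes_infinite)

lemma pr_bij: "bij_betw pr UNIV {p. prime p}"
  unfolding pr_def by (intro bij_enumerate primes_infinite)

lemma pr_inj: "inj pr"
  using pr_smono strict_mono_imp_inj_on by blast

lemma pr_ge: "pr j \<ge> j + 2"
proof (induction j)
  case 0
  have "2 \<le> pr 0" using pr_prime[of 0] prime_ge_2_nat by blast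
  then show ?case by simp
next
  case (Suc j)
  have "pr j < pr (Suc j)" using pr_smono by (simp add: strict_mono_def)
  then show ?case using Suc by simp
qed

lemma pr_mono: "i \<le> j \<Longrightarrow> pr i \<le> pr j"
  using pr_smono strict_mono_less_eq by blast

lemma norm_nat_powr: "norm ((of_nat n :: complex) powr z) = real n powr Re z"
proof -
  have "norm ((of_nat n :: complex) powr z) = Re (of_nat n) powr Re z"
    by (rule norm_powr_real_powr) auto
  then show ?thesis by simp
qed

lemma norm_real_powr: "0 \<le> a \<Longrightarrow> norm ((of_real a :: complex) powr z) = a powr Re z"
proof -
  assume "0 \<le> a"
  then have "norm ((of_real a :: complex) powr z) = Re (of_real a) powr Re z"
    by (intro norm_powr_real_powr) auto
  then show ?thesis by simp
qed

lemma of_real_powr_eq: "0 < a \<Longrightarrow> (of_real a :: complex) powr z = exp (z * of_real (ln a))"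
  unfolding powr_def by (simp add: Ln_of_real)
lemma holo_series:
  fixes f :: "nat \<Rightarrow> complex \<Rightarrow> complex"
  assumes S: "open S" and hol: "\<And>n. f n holomorphic_on S"
    and loc: "\<And>z. z \<in> S \<Longrightarrow> \<exists>d>0. \<exists>M. summable M \<and> (\<forall>n. \<forall>w\<in>cball z d. norm (f n w) \<le> M n)"
  shows "(\<lambda>z. \<Sum>n. f n z) holomorphic_on S"
proof (rule holomorphic_uniform_sequence[where f="\<lambda>N z. \<Sum>n<N. f n z"])
  show "open S" by fact
  show "(\<lambda>z. \<Sum>n<N. f n z) holomorphic_on S" for N
    by (rule holomorphic_on_sum) (use hol in blast)
  fix x assume x: "x \<in> S"
  obtain d M where d: "d > 0" "summable M" "\<And>n w. w \<in> cball x d \<Longrightarrow> norm (f n w) \<le> M n"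
    using loc[OF x] by blast
  obtain e where e: "e > 0" "cball x e \<subseteq> S" using S x open_contains_cball by blast
  define r where "r = min d e"
  have r: "r > 0" "cball x r \<subseteq> S" "cball x r \<subseteq> cball x d"
    using d e unfolding r_def by auto
  have "uniform_limit (cball x r) (\<lambda>N z. \<Sum>n<N. f n z) (\<lambda>z. \<Sum>n. f n z) sequentially"
    by (rule Weierstrass_m_test[where M=M]) (use d r in blast)+
  then show "\<exists>d>0. cball x d \<subseteq> S \<and> uniform_limit (cball x d) (\<lambda>N z. \<Sum>n<N. f n z) (\<lambda>z. \<Sum>n. f n z) sequentially"
    using r by blast
qed
lemma cball_Re:
  assumes "Re z > c"
  shows "\<exists>d>0. \<forall>w\<in>cball z d. Re w \<ge> (Re z + c)/2 \<and> norm w \<le> norm z + 1"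
proof -
  define d where "d = min 1 ((Re z - c)/2)"
  have "d > 0" using assms by (simp add: d_def)
  moreover have "Re w \<ge> (Re z + c)/2 \<and> norm w \<le> norm z + 1" if "w \<in> cball z d" for w
  proof -
    have "norm (z - w) \<le> d" using that by (simp add: dist_norm)
    moreover have "\<bar>Re z - Re w\<bar> \<le> norm (z - w)" using abs_Re_le_cmod[of "z - w"] by simp
    moreover have "norm w \<le> norm z + norm (z - w)" by (metis norm_minus_commute norm_triangle_sub add.commute)
    ultimately show ?thesis unfolding d_def by auto
  qed
  ultimately show ?thesis by blast
qed

lemma powr_diff_bound:
  fixes a b \<delta> :: real and s :: complex
  assumes a: "1 \<le> a" "a \<le> b" and d: "0 < \<delta>" "\<delta> \<le> Re s"
  shows "norm ((of_real a::complex) powr (-s) - of_real b powr (-s)) \<le> norm s / \<delta> * (a powr (-\<delta>) - b powr (-\<delta>))"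
proof -
  define y1 where "y1 = b powr (-\<delta>)"
  define y2 where "y2 = a powr (-\<delta>)"
  have y1: "0 < y1" unfolding y1_def using a by simp
  have y12: "y1 \<le> y2" unfolding y1_def y2_def using a d by (intro powr_mono2') auto
  have y2: "y2 \<le> 1" unfolding y2_def using a d using ge_one_powr_ge_zero[of a \<delta>] by (simp add: powr_minus inverse_le_1_iff)
  define h where "h = (\<lambda>z::complex. z powr (s / of_real \<delta>))"
  have hval: "h (of_real (x powr (-\<delta>))) = of_real x powr (-s)" if "x \<ge> 1" for x
  proof -
    have "h (of_real (x powr (-\<delta>))) = exp (s / of_real \<delta> * of_real (ln (x powr (-\<delta>))))"
      unfolding h_def by (rule of_real_powr_eq) (use that in simp)
    also have "ln (x powr (-\<delta>)) = - \<delta> * ln x" by simp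
    also have "s / of_real \<delta> * of_real (- \<delta> * ln x) = -s * of_real (ln x)" using d by (simp add: field_simps)
    also have "exp \<dots> = of_real x powr (-s)" by (rule sym, rule of_real_powr_eq) (use that in simp)
    finally show ?thesis .
  qed
  have "norm (h (of_real y2) - h (of_real y1)) \<le> norm s / \<delta> * norm (of_real y2 - (of_real y1::complex))"
  proof (rule field_differentiable_bound[where S="closed_segment (of_real y1) (of_real y2)"])
    show "convex (closed_segment (complex_of_real y1) (complex_of_real y2))" by simp
    fix z assume z: "z \<in> closed_segment (complex_of_real y1) (complex_of_real y2)"
    then obtain t where t: "z = of_real t" "t \<in> closed_segment y1 y2" by (auto simp: closed_segment_of_real)
    have t': "y1 \<le> t" "t \<le> y2" using t(2) y12 by (auto simp: closed_segment_eq_real_ivl)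
    have tpos: "t > 0" using t' y1 by linarith
    have zn: "z \<notin> \<real>\<^sub>\<le>\<^sub>0" unfolding t(1) using tpos by (simp add: complex_nonpos_Reals_iff)
    show "(h has_field_derivative (s / of_real \<delta> * z powr (s / of_real \<delta> - 1))) (at z within closed_segment (complex_of_real y1) (complex_of_real y2))"
      unfolding h_def using has_field_derivative_powr[OF zn] by (rule has_field_derivative_at_within)
    have "Re (s / of_real \<delta> - 1) = Re s / \<delta> - 1" by simp
    then have e1: "norm (z powr (s / of_real \<delta> - 1)) = t powr (Re s / \<delta> - 1)"
      using t(1) t' y1 norm_real_powr[of t "s / of_real \<delta> - 1"] by simp
    have e2: "norm (s / of_real \<delta>) = norm s / \<delta>" using d by (simp add: norm_divide)
    have "norm (s / of_real \<delta> * z powr (s / of_real \<delta> - 1)) = norm s / \<delta> * t powr (Re s / \<delta> - 1)"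
      unfolding norm_mult e1 e2 ..
    also have "\<dots> \<le> norm s / \<delta> * 1"
      using t' y1 y2 d by (intro mult_left_mono powr_le1) auto
    finally show "norm (s / of_real \<delta> * z powr (s / of_real \<delta> - 1)) \<le> norm s / \<delta>" by simp
  qed auto
  also have "norm (of_real y2 - (of_real y1::complex)) = y2 - y1" using y12
    by (metis abs_of_nonneg diff_ge_0_iff_ge norm_of_real of_real_diff)
  finally have fin: "norm (h (of_real y2) - h (of_real y1)) \<le> norm s / \<delta> * (y2 - y1)" .
  have ha: "h (of_real y2) = of_real a powr (-s)" unfolding y2_def by (rule hval) (use a in simp)
  have hb: "h (of_real y1) = of_real b powr (-s)" unfolding y1_def by (rule hval) (use a in simp)
  from fin have "norm (of_real a powr (-s) - of_real b powr (-s)) \<le> norm s / \<delta> * (y2 - y1)"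
    by (simp only: ha hb)
  then show ?thesis by (simp only: y1_def y2_def)
qed



definition pw :: "complex \<Rightarrow> nat \<Rightarrow> complex" where
  "pw s n = (of_nat n :: complex) powr (-s)"

lemma norm_pw: "norm (pw s n) = real n powr (- Re s)"
  unfolding pw_def by (simp add: norm_nat_powr)

lemma pw_holo [holomorphic_intros]: "(\<lambda>s. pw s n) holomorphic_on A"
  unfolding pw_def by (intro holomorphic_intros)

lemma summable_powr_ge:
  fixes x :: "nat \<Rightarrow> real"
  assumes x: "\<And>j. real j + 1 \<le> x j" and s: "\<sigma> > 1"
  shows "summable (\<lambda>j. x j powr (-\<sigma>))"
proof -
  have "summable (\<lambda>n. real n powr (-\<sigma>))" using s by (simp add: summable_real_powr_iff)
  then have sm: "summable (\<lambda>n. real (n + 1) powr (-\<sigma>))"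
    using summable_iff_shift[of "\<lambda>n. real n powr (-\<sigma>)" 1] by simp
  show ?thesis
  proof (rule summable_comparison_test'[OF sm])
    fix n :: nat
    have "x n powr (-\<sigma>) \<le> real (n + 1) powr (-\<sigma>)"
      using x[of n] s by (intro powr_mono2') auto
    then show "norm (x n powr (-\<sigma>)) \<le> real (n + 1) powr (-\<sigma>)" by simp
  qed
qed

lemma summable_pr_powr:
  assumes "\<sigma> > 1" "k \<ge> 1"
  shows "summable (\<lambda>j. real (pr (j * k)) powr (-\<sigma>))"
proof (rule summable_powr_ge[OF _ assms(1)])
  fix j
  have "j \<le> j * k" using assms by simp
  then show "real j + 1 \<le> real (pr (j * k))" using pr_ge[of "j * k"] by linarith
qed

lemma pw_norm_summable:
  assumes "Re s > 1" "k \<ge> 1"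
  shows "summable (\<lambda>j. norm (pw s (pr (j * k))))"
  unfolding norm_pw using summable_pr_powr[OF assms] by simp

lemma eta1_series:
  assumes "Re s > 1"
  shows "eta1 s = (\<Sum>j. pw s (pr j))"
proof -
  have sn: "summable (\<lambda>j. norm (pw s (pr j)))"
    using pw_norm_summable[OF assms, of 1] by simp
  have "(\<lambda>j. pw s (pr j)) summable_on UNIV"
    by (rule norm_summable_imp_summable_on[OF sn])
  then have "((\<lambda>j. pw s (pr j)) has_sum (\<Sum>\<^sub>\<infinity>j. pw s (pr j))) UNIV" by (rule has_sum_infsum)
  then have "(\<lambda>j. pw s (pr j)) sums (\<Sum>\<^sub>\<infinity>j. pw s (pr j))" by (rule has_sum_imp_sums)
  then have "(\<Sum>j. pw s (pr j)) = (\<Sum>\<^sub>\<infinity>j. pw s (pr j))" by (rule sums_unique[symmetric])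
  also have "\<dots> = infsum (pw s) {p. prime p}"
    using infsum_reindex_bij_betw[OF pr_bij, of "pw s"] by simp
  also have "\<dots> = eta1 s" unfolding eta1_def pw_def ..
  finally show ?thesis ..
qed

lemma open_Re_gt: "open {s::complex. Re s > c}"
  using open_halfspace_Re_gt by simp

lemma eta1_holo: "eta1 holomorphic_on {s. Re s > 1}"
proof -
  have "(\<lambda>s. \<Sum>j. pw s (pr j)) holomorphic_on {s. Re s > 1}"
  proof (rule holo_series)
    show "open {s::complex. Re s > 1}" by (rule open_Re_gt)
    show "(\<lambda>s. pw s (pr n)) holomorphic_on {s. Re s > 1}" for n by (rule pw_holo)
    fix z :: complex assume "z \<in> {s. Re s > 1}"
    then have z: "Re z > 1" by simp
    obtain d where d: "d > 0" "\<And>w. w \<in> cball z d \<Longrightarrow> Re w \<ge> (Re z + 1)/2 \<and> norm w \<le> norm z + 1"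
      using cball_Re[OF z] by blast
    define \<sigma> where "\<sigma> = (Re z + 1)/2"
    have \<sigma>: "\<sigma> > 1" using z by (simp add: \<sigma>_def)
    have "summable (\<lambda>j. real (pr (j * 1)) powr (-\<sigma>))" by (rule summable_pr_powr[OF \<sigma>]) simp
    moreover have "norm (pw w (pr n)) \<le> real (pr n) powr (-\<sigma>)" if "w \<in> cball z d" for n w
    proof -
      have "Re w \<ge> \<sigma>" using d(2)[OF that] by (simp add: \<sigma>_def)
      moreover have "real (pr n) \<ge> 1" using pr_ge[of n] by linarith
      ultimately show ?thesis unfolding norm_pw by (intro powr_mono) auto
    qed
    ultimately show "\<exists>d>0. \<exists>M. summable M \<and> (\<forall>n. \<forall>w\<in>cball z d. norm (pw w (pr n)) \<le> M n)"
      using d(1) by (intro exI[of _ d] conjI exI[of _ "\<lambda>j. real (pr j) powr (-\<sigma>)"]) auto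
  qed
  then show ?thesis
    by (rule holomorphic_transform) (simp add: eta1_series)
qed



definition Pk :: "nat \<Rightarrow> complex \<Rightarrow> complex" where
  "Pk k s = (\<Sum>j. pw s (pr (j * k)))"
definition Rf :: "complex \<Rightarrow> complex" where
  "Rf w = - Ln (1 - w) - w"
definition Hk :: "nat \<Rightarrow> complex \<Rightarrow> complex" where
  "Hk k s = (\<Sum>j. Rf (pw s (pr (j * k))))"
definition Ek :: "nat \<Rightarrow> complex \<Rightarrow> complex" where
  "Ek k s = (\<Sum>j. \<Sum>i<k. pw s (pr (j * k)) - pw s (pr (j * k + i)))"

lemma pr_ge1: "real (pr n) \<ge> 1" using pr_ge[of n] by linarith
lemma pr_ge2: "real (pr n) \<ge> 2" using pr_ge[of n] by linarith

lemma norm_pw_le: "Re s \<ge> \<sigma> \<Longrightarrow> n \<ge> 1 \<Longrightarrow> norm (pw s n) \<le> real n powr (-\<sigma>)"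
  unfolding norm_pw by (intro powr_mono) auto

lemma norm_pw_le2: assumes "Re s \<ge> \<sigma>" "\<sigma> > 0" "n \<ge> 2"
  shows "norm (pw s n) \<le> 2 powr (-\<sigma>)"
proof -
  have "norm (pw s n) \<le> real n powr (-\<sigma>)" using assms by (intro norm_pw_le) auto
  also have "\<dots> \<le> 2 powr (-\<sigma>)" using assms by (intro powr_mono2') auto
  finally show ?thesis .
qed

lemma two_powr_neg_lt1: "\<sigma> > 0 \<Longrightarrow> (2::real) powr (-\<sigma>) < 1"
  by (simp add: powr_less_one)

lemma Rf_bound: "norm w < 1 \<Longrightarrow> norm (Rf w) \<le> norm w ^ 2 / (1 - norm w)"
proof -
  assume "norm w < 1"
  then have "norm (Ln (1 + - w) - - w) \<le> norm (-w) ^ 2 / (1 - norm (-w))" by (intro Ln_approx_linear) simp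
  moreover have "Rf w = - (Ln (1 + - w) - - w)" by (simp add: Rf_def)
  ultimately show ?thesis by (simp only: norm_minus_cancel)
qed

lemma exp_Rf: assumes "norm w < 1" shows "exp (w + Rf w) = inverse (1 - w)"
proof -
  have "1 - w \<noteq> 0" using assms by auto
  have "w + Rf w = - Ln (1 - w)" by (simp add: Rf_def)
  then show ?thesis using \<open>1 - w \<noteq> 0\<close> by (simp add: exp_minus)
qed

lemma Rf_bound_pw:
  assumes "Re s \<ge> \<sigma>" "\<sigma> > 0" "n \<ge> 2"
  shows "norm (Rf (pw s n)) \<le> real n powr (-2*\<sigma>) / (1 - 2 powr (-\<sigma>))"
proof -
  define x where "x = norm (pw s n)"
  have x1: "x \<le> 2 powr (-\<sigma>)" unfolding x_def by (rule norm_pw_le2[OF assms])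
  have x2: "x \<le> real n powr (-\<sigma>)" unfolding x_def using assms by (intro norm_pw_le) auto
  have lt: "2 powr (-\<sigma>) < (1::real)" using assms by (intro two_powr_neg_lt1)
  have x0: "x \<ge> 0" unfolding x_def by simp
  have "norm (Rf (pw s n)) \<le> x ^ 2 / (1 - x)" unfolding x_def by (rule Rf_bound) (use x1 lt x_def in linarith)
  also have "\<dots> \<le> (real n powr (-\<sigma>)) ^ 2 / (1 - 2 powr (-\<sigma>))"
    using x0 x1 x2 lt by (intro frac_le power_mono) auto
  also have "(real n powr (-\<sigma>)) ^ 2 = real n powr (-2*\<sigma>)"
    using assms by (simp add: powr_powr[symmetric] power2_eq_square powr_add[symmetric])
  finally show ?thesis .
qed

lemma one_minus_pw_notin: assumes "Re s > 0" "n \<ge> 2" shows "1 - pw s n \<notin> \<real>\<^sub>\<le>\<^sub>0"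
proof -
  have "norm (pw s n) < 1"
    using norm_pw_le2[of "Re s" s n] assms two_powr_neg_lt1[of "Re s"] by linarith
  then have "Re (pw s n) < 1" using complex_Re_le_cmod[of "pw s n"] by linarith
  then have "Re (1 - pw s n) > 0" by simp
  then show ?thesis by (auto simp: complex_nonpos_Reals_iff)
qed

lemma Rf_pw_holo: "(\<lambda>s. Rf (pw s n)) holomorphic_on {s. Re s > 0}" if "n \<ge> 2"
  unfolding Rf_def
  by (intro holomorphic_intros holomorphic_on_Ln') (use one_minus_pw_notin that in auto)

lemma Hk_holo: assumes "k \<ge> 1" shows "Hk k holomorphic_on {s. Re s > 1/2}"
proof -
  have "(\<lambda>s. \<Sum>j. Rf (pw s (pr (j * k)))) holomorphic_on {s. Re s > 1/2}"
  proof (rule holo_series)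
    show "open {s::complex. Re s > 1/2}" by (rule open_Re_gt)
    show "(\<lambda>s. Rf (pw s (pr (n * k)))) holomorphic_on {s. Re s > 1/2}" for n
      by (rule holomorphic_on_subset[OF Rf_pw_holo]) (use pr_ge[of "n*k"] in auto)
    fix z :: complex assume "z \<in> {s. Re s > 1/2}"
    then have z: "Re z > 1/2" by simp
    obtain d where d: "d > 0" "\<And>w. w \<in> cball z d \<Longrightarrow> Re w \<ge> (Re z + 1/2)/2 \<and> norm w \<le> norm z + 1"
      using cball_Re[OF z] by blast
    define \<sigma> where "\<sigma> = (Re z + 1/2)/2"
    have \<sigma>: "\<sigma> > 1/2" using z by (simp add: \<sigma>_def)
    define C where "C = 1 / (1 - 2 powr (-\<sigma>))"
    have "summable (\<lambda>j. real (pr (j * k)) powr (-(2*\<sigma>)))" by (rule summable_pr_powr) (use \<sigma> assms in auto)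
    then have "summable (\<lambda>j. real (pr (j * k)) powr (-2*\<sigma>) * C)" by (intro summable_mult2) simp
    moreover have "norm (Rf (pw w (pr (n * k)))) \<le> real (pr (n * k)) powr (-2*\<sigma>) * C" if "w \<in> cball z d" for n w
    proof -
      have "Re w \<ge> \<sigma>" using d(2)[OF that] by (simp add: \<sigma>_def)
      then show ?thesis using Rf_bound_pw[of \<sigma> w "pr (n*k)"] \<sigma> pr_ge[of "n*k"] by (simp add: C_def)
    qed
    ultimately show "\<exists>d>0. \<exists>M. summable M \<and> (\<forall>n. \<forall>w\<in>cball z d. norm (Rf (pw w (pr (n * k)))) \<le> M n)"
      using d(1) by blast
  qed
  then show ?thesis unfolding Hk_def[abs_def] .
qed

lemma pw_eq_real: "pw s n = of_real (real n) powr (-s)"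
  unfolding pw_def by simp

lemma pw_diff_bound:
  assumes "1 \<le> a" "a \<le> b" "0 < \<delta>" "\<delta> \<le> Re s"
  shows "norm (pw s a - pw s b) \<le> norm s / \<delta> * (real a powr (-\<delta>) - real b powr (-\<delta>))"
  unfolding pw_eq_real by (rule powr_diff_bound) (use assms in auto)

lemma pr_tendsto: assumes "k \<ge> 1" "\<delta> > 0"
  shows "(\<lambda>j. real (pr (j * k)) powr (-\<delta>)) \<longlonglongrightarrow> 0"
proof (rule tendsto_neg_powr)
  show "- \<delta> < 0" using assms by simp
  show "filterlim (\<lambda>j. real (pr (j * k))) at_top sequentially"
  proof (rule filterlim_at_top_mono[OF filterlim_real_sequentially])
    show "\<forall>\<^sub>F x in sequentially. real x \<le> real (pr (x * k))"
    proof (rule always_eventually, rule allI)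
      fix x :: nat
      have "x \<le> x * k" using assms by simp
      then have "x \<le> pr (x * k)" using pr_ge[of "x*k"] by linarith
      then show "real x \<le> real (pr (x * k))" by simp
    qed
  qed
qed

lemma Ek_holo: assumes "k \<ge> 1" shows "Ek k holomorphic_on {s. Re s > 0}"
proof -
  have "(\<lambda>s. \<Sum>j. \<Sum>i<k. pw s (pr (j * k)) - pw s (pr (j * k + i))) holomorphic_on {s. Re s > 0}"
  proof (rule holo_series)
    show "open {s::complex. Re s > 0}" by (rule open_Re_gt)
    show "(\<lambda>s. \<Sum>i<k. pw s (pr (n * k)) - pw s (pr (n * k + i))) holomorphic_on {s. Re s > 0}" for n
      by (intro holomorphic_intros)
    fix z :: complex assume "z \<in> {s. Re s > 0}"
    then have z: "Re z > 0" by simp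
    obtain d where d: "d > 0" "\<And>w. w \<in> cball z d \<Longrightarrow> Re w \<ge> (Re z + 0)/2 \<and> norm w \<le> norm z + 1"
      using cball_Re[OF z] by blast
    define \<delta> where "\<delta> = Re z / 2"
    have \<delta>: "\<delta> > 0" using z by (simp add: \<delta>_def)
    define R where "R = norm z + 1"
    define c where "c = (\<lambda>j. real (pr (j * k)) powr (-\<delta>))"
    have "summable (\<lambda>j. c j - c (Suc j))" unfolding c_def
      by (rule telescope_summable'[OF pr_tendsto[OF assms \<delta>]])
    then have "summable (\<lambda>j. real k * (R / \<delta>) * (c j - c (Suc j)))" by (rule summable_mult)
    moreover have "norm (\<Sum>i<k. pw w (pr (n * k)) - pw w (pr (n * k + i))) \<le> real k * (R / \<delta>) * (c n - c (Suc n))"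
      if w: "w \<in> cball z d" for n w
    proof -
      have wd: "Re w \<ge> \<delta>" "norm w \<le> R" using d(2)[OF w] by (auto simp: \<delta>_def R_def)
      have "norm (\<Sum>i<k. pw w (pr (n * k)) - pw w (pr (n * k + i))) \<le> (\<Sum>i<k. norm (pw w (pr (n * k)) - pw w (pr (n * k + i))))"
        by (rule norm_sum)
      also have "\<dots> \<le> (\<Sum>i<k. (R / \<delta>) * (c n - c (Suc n)))"
      proof (rule sum_mono)
        fix i assume i: "i \<in> {..<k}"
        have le1: "pr (n * k) \<le> pr (n * k + i)" by (rule pr_mono) simp
        have le2: "pr (n * k + i) \<le> pr (Suc n * k)" by (rule pr_mono) (use i in simp)
        have "norm (pw w (pr (n * k)) - pw w (pr (n * k + i))) \<le> norm w / \<delta> * (real (pr (n * k)) powr (-\<delta>) - real (pr (n * k + i)) powr (-\<delta>))"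
          by (rule pw_diff_bound) (use le1 wd \<delta> pr_ge[of "n*k"] in auto)
        also have "\<dots> \<le> R / \<delta> * (c n - c (Suc n))"
        proof (rule mult_mono)
          show "norm w / \<delta> \<le> R / \<delta>" using wd \<delta> by (simp add: divide_right_mono)
          have "real (pr (Suc n * k)) powr (-\<delta>) \<le> real (pr (n * k + i)) powr (-\<delta>)"
            using le2 \<delta> pr_ge1[of "n*k+i"] by (intro powr_mono2') auto
          then show "real (pr (n * k)) powr (-\<delta>) - real (pr (n * k + i)) powr (-\<delta>) \<le> c n - c (Suc n)"
            unfolding c_def by simp
          show "0 \<le> R / \<delta>" using wd \<delta> by (simp add: R_def)
          have "real (pr (n * k + i)) powr (-\<delta>) \<le> real (pr (n * k)) powr (-\<delta>)"
            using le1 \<delta> pr_ge1[of "n*k"] by (intro powr_mono2') auto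
          then show "0 \<le> real (pr (n * k)) powr (-\<delta>) - real (pr (n * k + i)) powr (-\<delta>)" by simp
        qed
        finally show "norm (pw w (pr (n * k)) - pw w (pr (n * k + i))) \<le> R / \<delta> * (c n - c (Suc n))" .
      qed
      also have "\<dots> = real k * (R / \<delta>) * (c n - c (Suc n))" by simp
      finally show ?thesis .
    qed
    ultimately show "\<exists>d>0. \<exists>M. summable M \<and> (\<forall>n. \<forall>w\<in>cball z d. norm (\<Sum>i<k. pw w (pr (n * k)) - pw w (pr (n * k + i))) \<le> M n)"
      using d(1) by blast
  qed
  then show ?thesis unfolding Ek_def[abs_def] .
qed



lemma norm_pw_pr_lt1: "Re s > 0 \<Longrightarrow> norm (pw s (pr n)) < 1"
  using norm_pw_le2[of "Re s" s "pr n"] two_powr_neg_lt1[of "Re s"] pr_ge[of n] by linarith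

lemma summable_Rf_pr:
  assumes "Re s > 1/2" "k \<ge> 1"
  shows "summable (\<lambda>j. norm (Rf (pw s (pr (j * k)))))"
proof -
  define C where "C = 1 / (1 - 2 powr (- Re s))"
  have "summable (\<lambda>j. real (pr (j * k)) powr (-(2 * Re s)))" by (rule summable_pr_powr) (use assms in auto)
  then have sm: "summable (\<lambda>j. real (pr (j * k)) powr (-2 * Re s) * C)" by (intro summable_mult2) simp
  show ?thesis
  proof (rule summable_comparison_test'[OF sm])
    fix n
    show "norm (norm (Rf (pw s (pr (n * k))))) \<le> real (pr (n * k)) powr (-2 * Re s) * C"
      using Rf_bound_pw[of "Re s" s "pr (n*k)"] assms pr_ge[of "n*k"] by (simp add: C_def)
  qed
qed

lemma zetak_exp:
  assumes s: "Re s > 1" and k: "k \<ge> 1"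
  shows "zetak k s = exp (Pk k s + Hk k s)"
proof -
  define a where "a = (\<lambda>j. pw s (pr (j * k)) + Rf (pw s (pr (j * k))))"
  have s1: "summable (\<lambda>j. pw s (pr (j * k)))"
    by (rule summable_norm_cancel[OF pw_norm_summable[OF s k]])
  have s2: "summable (\<lambda>j. Rf (pw s (pr (j * k))))"
    by (rule summable_norm_cancel[OF summable_Rf_pr]) (use s k in auto)
  have sa: "summable a" unfolding a_def by (rule summable_add[OF s1 s2])
  have fac: "inverse (1 - (of_nat (pr (j * k)) :: complex) powr (- s)) = exp (a j)" for j
  proof -
    have "norm (pw s (pr (j * k))) < 1" by (rule norm_pw_pr_lt1) (use s in simp)
    then show ?thesis unfolding a_def using exp_Rf by (simp add: pw_def)
  qed
  have "zetak k s = prodinf (\<lambda>j. exp (a j))" unfolding zetak_def fac ..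
  also have "\<dots> = exp (suminf a)" by (rule prodinf_exp[OF sa])
  also have "suminf a = Pk k s + Hk k s" unfolding a_def Pk_def Hk_def by (rule suminf_add[OF s1 s2, symmetric])
  finally show ?thesis .
qed

lemma zetak1_partial:
  assumes s: "Re s > 1"
  shows "(\<lambda>n. \<Prod>j\<le>n. inverse (1 - pw s (pr j))) \<longlonglongrightarrow> zetak 1 s"
proof -
  define a where "a = (\<lambda>j. pw s (pr j) + Rf (pw s (pr j)))"
  have s1: "summable (\<lambda>j. pw s (pr j))"
    using summable_norm_cancel[OF pw_norm_summable[OF s, of 1]] by simp
  have s2: "summable (\<lambda>j. Rf (pw s (pr j)))"
    using summable_norm_cancel[OF summable_Rf_pr[of s 1]] s by simp
  have sa: "summable a" unfolding a_def by (rule summable_add[OF s1 s2])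
  have fac: "inverse (1 - pw s (pr j)) = exp (a j)" for j
  proof -
    have "norm (pw s (pr j)) < 1" by (rule norm_pw_pr_lt1) (use s in simp)
    then show ?thesis unfolding a_def using exp_Rf by simp
  qed
  have "(\<lambda>n. \<Prod>j\<le>n. exp (a j)) \<longlonglongrightarrow> prodinf (\<lambda>j. exp (a j))"
    by (rule convergent_prod_LIMSEQ[OF convergent_prod_exp[OF sa]])
  moreover have "prodinf (\<lambda>j. exp (a j)) = zetak 1 s"
    unfolding zetak_def by (simp add: fac[symmetric] pw_def)
  ultimately show ?thesis by (simp add: fac)
qed

lemma sum_shift_ivl: "(\<Sum>i<k. f (m + i)) = sum f {m..<m+k}" for k m :: nat
proof (induction k)
  case 0 then show ?case by simp
next
  case (Suc k)
  have "sum f {m..<m + Suc k} = sum f {m..<m+k} + f (m + k)" by simp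
  then show ?case using Suc by simp
qed

lemma Ek_rel:
  assumes s: "Re s > 1" and k: "k \<ge> 1"
  shows "of_nat k * Pk k s = eta1 s + Ek k s"
proof -
  have s1: "summable (\<lambda>j. pw s (pr (j * k)))"
    by (rule summable_norm_cancel[OF pw_norm_summable[OF s k]])
  have se: "summable (\<lambda>j. pw s (pr j))"
    using summable_norm_cancel[OF pw_norm_summable[OF s, of 1]] by simp
  have "(\<lambda>j. pw s (pr j)) sums eta1 s" using summable_sums[OF se] eta1_series[OF s] by simp
  then have g: "(\<lambda>n. sum (\<lambda>j. pw s (pr j)) {n * k..<n * k + k}) sums eta1 s"
    by (rule sums_group) (use k in simp)
  have "(\<lambda>j. of_nat k * pw s (pr (j * k))) sums (of_nat k * Pk k s)"
    unfolding Pk_def by (intro sums_mult summable_sums[OF s1])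
  from sums_diff[OF this g]
  have "(\<lambda>j. of_nat k * pw s (pr (j * k)) - sum (\<lambda>j. pw s (pr j)) {j * k..<j * k + k}) sums (of_nat k * Pk k s - eta1 s)" .
  moreover have "of_nat k * pw s (pr (j * k)) - sum (\<lambda>j. pw s (pr j)) {j * k..<j * k + k}
      = (\<Sum>i<k. pw s (pr (j * k)) - pw s (pr (j * k + i)))" for j
    by (simp add: sum_subtractf sum_shift_ivl[symmetric])
  ultimately have "(\<lambda>j. \<Sum>i<k. pw s (pr (j * k)) - pw s (pr (j * k + i))) sums (of_nat k * Pk k s - eta1 s)"
    by simp
  then have "Ek k s = of_nat k * Pk k s - eta1 s" unfolding Ek_def by (rule sums_unique[symmetric])
  then show ?thesis by simp
qed

definition Ak :: "nat \<Rightarrow> complex \<Rightarrow> complex" where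
  "Ak k s = Ek k s + of_nat k * Hk k s"

lemma Ak_holo: "k \<ge> 1 \<Longrightarrow> Ak k holomorphic_on {s. Re s > 1/2}"
  unfolding Ak_def[abs_def]
  by (intro holomorphic_intros holomorphic_on_subset[OF Ek_holo] Hk_holo) auto

lemma zetak_Ak:
  assumes s: "Re s > 1" and k: "k \<ge> 1"
  shows "zetak k s = exp ((eta1 s + Ak k s) / of_nat k)"
proof -
  have "(eta1 s + Ak k s) / of_nat k = (of_nat k * Pk k s + of_nat k * Hk k s) / of_nat k"
    unfolding Ak_def using Ek_rel[OF s k] by (simp add: algebra_simps)
  also have "\<dots> = Pk k s + Hk k s" using k by (simp add: field_simps)
  finally show ?thesis using zetak_exp[OF s k] by simp
qed



definition Sv :: "nat \<Rightarrow> nat set" where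
  "Sv N = {n. 0 < n \<and> (\<forall>j<N. \<not> pr j dvd n)}"

lemma pw_mult: "pw s (a * b) = pw s a * pw s b"
  unfolding pw_def of_nat_mult by (rule powr_times_real_left) auto

lemma pw_one [simp]: "pw s 1 = 1" by (simp add: pw_def)

lemma pw_norm_summable_all: "Re s > 1 \<Longrightarrow> summable (\<lambda>n. norm (pw s n))"
  unfolding norm_pw by (simp add: summable_real_powr_iff)

lemma pw_abs_summable_on: "Re s > 1 \<Longrightarrow> (\<lambda>n. norm (pw s n)) summable_on A"
proof -
  assume "Re s > 1"
  then have "(\<lambda>n. norm (pw s n)) summable_on UNIV"
    by (intro summable_nonneg_imp_summable_on pw_norm_summable_all) auto
  then show ?thesis by (rule summable_on_subset_banach) simp
qed

lemma pw_summable_on: "Re s > 1 \<Longrightarrow> pw s summable_on A"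
  by (rule abs_summable_summable) (rule pw_abs_summable_on)

lemma Sv_0: "Sv 0 = range Suc"
proof
  show "Sv 0 \<subseteq> range Suc"
  proof
    fix n assume "n \<in> Sv 0"
    then have "n = Suc (n - 1)" by (simp add: Sv_def)
    then show "n \<in> range Suc" by (rule range_eqI)
  qed
  show "range Suc \<subseteq> Sv 0" by (auto simp: Sv_def)
qed

lemma Sv_img: "(\<lambda>m. pr N * m) ` Sv N = {n \<in> Sv N. pr N dvd n}"
  proof safe
    fix m assume m: "m \<in> Sv N"
    have p: "prime (pr N)" by (rule pr_prime)
    show "pr N * m \<in> Sv N" unfolding Sv_def
    proof safe
      show "0 < pr N * m" using m p by (auto simp: Sv_def prime_gt_0_nat)
      fix j assume j: "j < N" "pr j dvd pr N * m"
      then have "pr j dvd pr N \<or> pr j dvd m" using prime_dvd_mult_iff pr_prime by blast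
      then show False
      proof
        assume "pr j dvd pr N"
        then have "pr j = pr N" using primes_dvd_imp_eq pr_prime by blast
        then have "j = N" using pr_inj by (simp add: inj_eq)
        then show False using j by simp
      next
        assume "pr j dvd m" then show False using m j by (auto simp: Sv_def)
      qed
    qed
    show "pr N dvd pr N * m" by simp
  next
    fix n assume n: "n \<in> Sv N" "pr N dvd n"
    then obtain m where m: "n = pr N * m" by blast
    have "m \<in> Sv N" using n unfolding Sv_def m by (auto intro: dvd_mult_right)
    then show "n \<in> (\<lambda>m. pr N * m) ` Sv N" using m by blast
  qed

lemma Sv_Suc: "Sv (Suc N) = Sv N - (\<lambda>m. pr N * m) ` Sv N"
  unfolding Sv_img by (auto simp: Sv_def less_Suc_eq)

lemma Sv_has_sum:
  assumes s: "Re s > 1"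
  shows "(pw s has_sum (zeta s * (\<Prod>j<N. 1 - pw s (pr j)))) (Sv N)"
proof (induction N)
  case 0
  have "(\<lambda>n. pw s (Suc n)) summable_on UNIV"
    by (rule norm_summable_imp_summable_on) (use summable_iff_shift[of "\<lambda>n. norm (pw s n)" 1] pw_norm_summable_all[OF s] in simp)
  then have h: "((\<lambda>n. pw s (Suc n)) has_sum (\<Sum>\<^sub>\<infinity>n. pw s (Suc n))) UNIV" by (rule has_sum_infsum)
  then have "(\<lambda>n. pw s (Suc n)) sums (\<Sum>\<^sub>\<infinity>n. pw s (Suc n))" by (rule has_sum_imp_sums)
  then have "zeta s = (\<Sum>\<^sub>\<infinity>n. pw s (Suc n))" unfolding zeta_def pw_def by (rule sums_unique[symmetric])
  with h have "((pw s \<circ> Suc) has_sum zeta s) UNIV" by (simp add: o_def)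
  then have "(pw s has_sum zeta s) (Suc ` UNIV)" by (subst has_sum_reindex) auto
  then show ?case by (simp add: Sv_0)
next
  case (Suc N)
  define X where "X = zeta s * (\<Prod>j<N. 1 - pw s (pr j))"
  have IH: "(pw s has_sum X) (Sv N)" using Suc unfolding X_def .
  have injm: "inj_on (\<lambda>m. pr N * m) (Sv N)"
    using pr_prime[of N] by (intro inj_onI) (auto simp: prime_gt_0_nat)
  have "((\<lambda>m. pw s (pr N) * pw s m) has_sum (pw s (pr N) * X)) (Sv N)"
    by (rule has_sum_cmult_right[OF IH])
  then have "((pw s \<circ> (\<lambda>m. pr N * m)) has_sum (pw s (pr N) * X)) (Sv N)"
    by (simp add: o_def pw_mult)
  then have T: "(pw s has_sum (pw s (pr N) * X)) ((\<lambda>m. pr N * m) ` Sv N)"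
    by (subst has_sum_reindex[OF injm])
  have sub: "(\<lambda>m. pr N * m) ` Sv N \<subseteq> Sv N" unfolding Sv_img by blast
  have "(pw s has_sum (X - pw s (pr N) * X)) (Sv N - (\<lambda>m. pr N * m) ` Sv N)"
    by (rule has_sum_Diff[OF IH T sub])
  moreover have "X - pw s (pr N) * X = zeta s * (\<Prod>j<Suc N. 1 - pw s (pr j))"
    unfolding X_def by (simp add: algebra_simps)
  ultimately show ?case by (simp add: Sv_Suc)
qed

lemma pr_ne1: "pr j \<noteq> 1" using pr_prime[of j] by auto

lemma one_in_Sv: "1 \<in> Sv N"
  unfolding Sv_def using pr_ne1 by auto

lemma Sv_large: assumes "n \<in> Sv N" "n \<noteq> 1" shows "N \<le> n"
proof -
  have n0: "n > 0" using assms by (simp add: Sv_def)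
  obtain q where q: "prime q" "q dvd n" using prime_factor_nat[OF assms(2)] by blast
  have "q \<in> pr ` UNIV" using bij_betw_imp_surj_on[OF pr_bij] q(1) by blast
  then obtain i where i: "q = pr i" by blast
  have "\<not> i < N" using assms(1) q(2) i by (auto simp: Sv_def)
  moreover have "q \<le> n" using q(2) n0 by (rule dvd_imp_le)
  ultimately show ?thesis using pr_ge[of i] i by linarith
qed

lemma tail_tendsto:
  fixes g :: "nat \<Rightarrow> real"
  assumes "summable g"
  shows "(\<lambda>N. \<Sum>n. g (n + N)) \<longlonglongrightarrow> 0"
proof -
  have eq: "(\<Sum>n. g (n + N)) = suminf g - sum g {..<N}" for N
    using suminf_split_initial_segment[OF assms, of N] by simp
  have "(\<lambda>N. suminf g - sum g {..<N}) \<longlonglongrightarrow> suminf g - suminf g"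
    by (intro tendsto_diff tendsto_const summable_LIMSEQ[OF assms])
  then show ?thesis unfolding eq by simp
qed

lemma range_add: "range (\<lambda>n::nat. n + N) = {N..}"
proof
  show "{N..} \<subseteq> range (\<lambda>n. n + N)"
  proof
    fix x assume "x \<in> {N..}"
    then have "x = (x - N) + N" by simp
    then show "x \<in> range (\<lambda>n. n + N)" by (rule range_eqI)
  qed
qed auto

lemma infsum_tail:
  fixes g :: "nat \<Rightarrow> real"
  assumes "summable g" "\<And>n. g n \<ge> 0"
  shows "infsum g {N..} = (\<Sum>n. g (n + N))"
proof -
  have "infsum g {N..} = infsum (g \<circ> (\<lambda>n. n + N)) UNIV"
    unfolding range_add[symmetric] by (rule infsum_reindex) simp
  moreover have "(\<lambda>n. g (n + N)) summable_on UNIV"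
    by (rule summable_nonneg_imp_summable_on) (use assms summable_iff_shift[of g N] in auto)
  then have "((\<lambda>n. g (n + N)) has_sum infsum (\<lambda>n. g (n + N)) UNIV) UNIV" by (rule has_sum_infsum)
  then have "(\<lambda>n. g (n + N)) sums infsum (\<lambda>n. g (n + N)) UNIV" by (rule has_sum_imp_sums)
  ultimately show ?thesis by (simp add: o_def sums_unique)
qed

lemma prod_inverse_lt: "(\<Prod>j<N. inverse (a j :: complex)) = inverse (\<Prod>j<N. a j)" for N :: nat
  by (induction N) (simp_all add: inverse_mult_distrib)

lemma zeta_euler:
  assumes s: "Re s > 1"
  shows "zeta s = zetak 1 s"
proof -
  define Q where "Q = (\<lambda>N. \<Prod>j<N. 1 - pw s (pr j))"
  define g where "g = (\<lambda>n. norm (pw s n))"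
  have gs: "summable g" unfolding g_def by (rule pw_norm_summable_all[OF s])
  have g0: "g n \<ge> 0" for n unfolding g_def by simp
  have bound: "norm (zeta s * Q N - 1) \<le> (\<Sum>n. g (n + N))" for N
  proof -
    have h1: "(pw s has_sum (zeta s * Q N)) (Sv N)" unfolding Q_def by (rule Sv_has_sum[OF s])
    have h2: "(pw s has_sum 1) {1}" using has_sum_finite[of "{1::nat}" "pw s"] by (simp add: pw_def)
    have "(pw s has_sum (zeta s * Q N - 1)) (Sv N - {1})"
      by (rule has_sum_Diff[OF h1 h2]) (use one_in_Sv in auto)
    then have eq: "zeta s * Q N - 1 = infsum (pw s) (Sv N - {1})" by (simp add: infsumI)
    have "norm (infsum (pw s) (Sv N - {1})) \<le> infsum g (Sv N - {1})"
      unfolding g_def by (rule norm_infsum_bound) (rule pw_abs_summable_on[OF s])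
    also have "\<dots> \<le> infsum g {N..}"
    proof (rule infsum_mono2)
      show "g summable_on Sv N - {1}" "g summable_on {N..}" unfolding g_def by (rule pw_abs_summable_on[OF s])+
      show "Sv N - {1} \<subseteq> {N..}" using Sv_large by auto
      show "0 \<le> g x" for x by (rule g0)
    qed
    also have "\<dots> = (\<Sum>n. g (n + N))" by (rule infsum_tail[OF gs g0])
    finally show ?thesis unfolding eq .
  qed
  have "(\<lambda>N. zeta s * Q N - 1) \<longlonglongrightarrow> 0"
    by (rule Lim_null_comparison[OF always_eventually tail_tendsto[OF gs]]) (use bound in blast)
  then have lim1: "(\<lambda>N. zeta s * Q N) \<longlonglongrightarrow> 1" by (rule LIM_zero_cancel)
  have z0: "zeta s \<noteq> 0"
  proof
    assume "zeta s = 0"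
    then have "(\<lambda>N. zeta s * Q N) \<longlonglongrightarrow> 0" by simp
    with lim1 show False using LIMSEQ_unique by fastforce
  qed
  have "(\<lambda>N. zeta s * Q N * inverse (zeta s)) \<longlonglongrightarrow> 1 * inverse (zeta s)"
    by (rule tendsto_mult_right[OF lim1])
  moreover have "zeta s * Q N * inverse (zeta s) = Q N" for N using z0 by (simp add: field_simps)
  ultimately have "Q \<longlonglongrightarrow> inverse (zeta s)" by simp
  then have "(\<lambda>N. inverse (Q N)) \<longlonglongrightarrow> inverse (inverse (zeta s))"
    by (rule tendsto_inverse) (use z0 in simp)
  then have "(\<lambda>N. \<Prod>j<N. inverse (1 - pw s (pr j))) \<longlonglongrightarrow> zeta s"
    unfolding Q_def prod_inverse_lt by simp
  then have A: "(\<lambda>n. \<Prod>j\<le>n. inverse (1 - pw s (pr j))) \<longlonglongrightarrow> zeta s"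
    using LIMSEQ_Suc by (fastforce simp: lessThan_Suc_atMost)
  show ?thesis using LIMSEQ_unique[OF A zetak1_partial[OF s]] .
qed



lemma Omega_sub: "Omega_half \<subseteq> {s. Re s > 1/2}"
  unfolding Omega_half_def by auto

lemma Omega_sup: "{s. Re s > 1} \<subseteq> Omega_half"
  unfolding Omega_half_def by auto

lemma Omega_Re_gt1: "Re s > 1 \<Longrightarrow> s \<in> Omega_half"
  using Omega_sup by auto

lemma one_notin_Omega: "1 \<notin> Omega_half"
  unfolding Omega_half_def by (auto intro: exI[of _ 1])

lemma open_Omega: "open Omega_half"
proof -
  have eq: "Omega_half = {s. Re s > 1/2} - complex_of_real ` {1/2..1}"
    unfolding Omega_half_def by auto
  have "compact (complex_of_real ` {1/2..1})"
    by (intro compact_continuous_image continuous_intros) auto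
  then have "closed (complex_of_real ` {1/2..1})" by (rule compact_imp_closed)
  then show ?thesis unfolding eq by (intro open_Diff open_Re_gt)
qed

lemma starlike_Omega: "starlike Omega_half"
  unfolding starlike_def
proof (intro bexI[of _ 2] ballI subsetI)
  show "2 \<in> Omega_half" by (rule Omega_Re_gt1) simp
  fix x y assume x: "x \<in> Omega_half" and y: "y \<in> closed_segment 2 x"
  obtain u where u: "0 \<le> u" "u \<le> 1" "y = (1 - u) *\<^sub>R 2 + u *\<^sub>R x" using y in_segment(1) by blast
  have xr: "Re x > 1/2" using x Omega_sub by auto
  have Rey: "Re y = (1 - u) * 2 + u * Re x" "Im y = u * Im x" using u(3) by simp_all
  have "Re y > 1/2"
  proof -
    have e: "(1 - u) * (1/2) + u * (1/2) = (1/2::real)" by (simp add: field_simps)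
    have "(1 - u) * 2 + u * Re x > (1 - u) * (1/2) + u * (1/2)"
    proof (cases "u = 1")
      case True then show ?thesis using xr by simp
    next
      case False then have "1 - u > 0" using u by simp
      then show ?thesis using u xr by (intro add_less_le_mono mult_strict_left_mono mult_left_mono) auto
    qed
    then show ?thesis using Rey(1) e by linarith
  qed
  moreover have "\<not> (\<exists>r. y = complex_of_real r \<and> 1/2 \<le> r \<and> r \<le> 1)"
  proof
    assume "\<exists>r. y = complex_of_real r \<and> 1/2 \<le> r \<and> r \<le> 1"
    then obtain r where r: "y = complex_of_real r" "1/2 \<le> r" "r \<le> 1" by blast
    have "u * Im x = 0" using Rey r by simp
    then consider "u = 0" | "Im x = 0" by auto
    then show False
    proof cases
      case 1 then have "y = 2" using u by simp
      then show False using r by (metis Re_complex_of_real numeral_le_one_iff semiring_norm(69) of_real_numeral)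
    next
      case 2
      then have "x = complex_of_real (Re x)" by (simp add: complex_eq_iff)
      then have "Re x > 1" using x xr unfolding Omega_half_def by force
      then have "(1 - u) * 2 + u * Re x \<ge> (1 - u) * 1 + u * 1" using u
        by (intro add_mono mult_left_mono) auto
      moreover have "(1 - u) * 2 + u * Re x > (1 - u) * 1 + u * 1"
      proof (cases "u = 0")
        case True then show ?thesis by simp
      next
        case False then have "u > 0" using u by simp
        then show ?thesis using u \<open>Re x > 1\<close> by (intro add_le_less_mono mult_strict_left_mono mult_left_mono) auto
      qed
      ultimately have "Re y > 1" using Rey by simp
      then show False using r by simp
    qed
  qed
  ultimately show "y \<in> Omega_half" unfolding Omega_half_def by blast
qed

lemma simply_connected_Omega: "simply_connected Omega_half"
  by (rule starlike_imp_simply_connected[OF starlike_Omega])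

lemma connected_Omega: "connected Omega_half"
  by (rule simply_connected_imp_connected[OF simply_connected_Omega])



definition tn :: "complex \<Rightarrow> nat \<Rightarrow> complex" where
  "tn s n = pw s (Suc n) - ((of_nat (Suc n) :: complex) powr (1 - s) - of_nat (Suc (Suc n)) powr (1 - s)) / (s - 1)"

lemma alg_tn:
  fixes s A B p XA XB :: complex
  assumes "s \<noteq> 1" "A = B + 1"
  shows "p * A - XA / (1 - s) - (p * B - XB / (1 - s)) = p - (XB - XA) / (s - 1)"
proof -
  have "1 - s \<noteq> 0" "s - 1 \<noteq> 0" using assms by auto
  have "XA / (1 - s) = - (XA / (s - 1))" by (simp add: divide_minus_right[symmetric])
  moreover have "XB / (1 - s) = - (XB / (s - 1))" by (simp add: divide_minus_right[symmetric])
  moreover have "(XB - XA) / (s - 1) = XB / (s - 1) - XA / (s - 1)" by (simp add: diff_divide_distrib)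
  ultimately show ?thesis using assms(2) by (simp add: algebra_simps)
qed

lemma tn_bound:
  assumes d: "0 < \<delta>" "\<delta> \<le> Re s" and s1: "s \<noteq> 1"
  shows "norm (tn s n) \<le> norm s / \<delta> * (real (Suc n) powr (-\<delta>) - real (Suc (Suc n)) powr (-\<delta>))"
proof -
  define a where "a = real (Suc n)"
  have a1: "a \<ge> 1" by (simp add: a_def)
  define p where "p = pw s (Suc n)"
  have p: "p = of_real a powr (-s)" unfolding p_def a_def pw_eq_real ..
  define \<phi> where "\<phi> = (\<lambda>z::complex. p * z - z powr (1 - s) / (1 - s))"
  define B where "B = norm s / \<delta> * (a powr (-\<delta>) - (a + 1) powr (-\<delta>))"
  have ns: "1 - s \<noteq> 0" using s1 by simp
  have "norm (\<phi> (of_real (a + 1)) - \<phi> (of_real a)) \<le> B * norm (of_real (a + 1) - (of_real a :: complex))"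
  proof (rule field_differentiable_bound[where S="closed_segment (of_real a) (of_real (a + 1))"])
    show "convex (closed_segment (complex_of_real a) (complex_of_real (a + 1)))" by simp
    fix z assume z: "z \<in> closed_segment (complex_of_real a) (complex_of_real (a + 1))"
    then have "z \<in> of_real ` closed_segment a (a + 1)" by (simp only: closed_segment_of_real)
    then obtain t where t: "z = of_real t" "t \<in> closed_segment a (a + 1)" by blast
    have t': "a \<le> t" "t \<le> a + 1" using t(2) by (auto simp: closed_segment_eq_real_ivl)
    have tpos: "t > 0" using t' a1 by linarith
    have zn: "z \<notin> \<real>\<^sub>\<le>\<^sub>0" unfolding t(1) using tpos by (simp add: complex_nonpos_Reals_iff)
    have "((\<lambda>z. z powr (1 - s)) has_field_derivative ((1 - s) * z powr (1 - s - 1))) (at z)"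
      by (rule has_field_derivative_powr[OF zn])
    then have d1: "((\<lambda>z. z powr (1 - s) / (1 - s)) has_field_derivative ((1 - s) * z powr (1 - s - 1) / (1 - s))) (at z)"
      by (rule DERIV_cdivide)
    have d2: "((\<lambda>z. p * z) has_field_derivative (p * 1)) (at z)"
      by (rule DERIV_cmult[OF DERIV_ident])
    have "(\<phi> has_field_derivative (p * 1 - (1 - s) * z powr (1 - s - 1) / (1 - s))) (at z)"
      unfolding \<phi>_def by (rule DERIV_diff[OF d2 d1])
    moreover have "p * 1 - (1 - s) * z powr (1 - s - 1) / (1 - s) = p - z powr (-s)"
      using ns by simp
    ultimately show "(\<phi> has_field_derivative (p - z powr (-s))) (at z within closed_segment (complex_of_real a) (complex_of_real (a + 1)))"
      by (simp add: has_field_derivative_at_within)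
    have "norm (p - z powr (-s)) \<le> norm s / \<delta> * (a powr (-\<delta>) - t powr (-\<delta>))"
      unfolding p t(1) by (rule powr_diff_bound) (use a1 t' d in auto)
    also have "\<dots> \<le> B" unfolding B_def
    proof (rule mult_left_mono)
      have "(a + 1) powr (-\<delta>) \<le> t powr (-\<delta>)" using t' tpos d by (intro powr_mono2') auto
      then show "a powr (-\<delta>) - t powr (-\<delta>) \<le> a powr (-\<delta>) - (a + 1) powr (-\<delta>)" by simp
      show "0 \<le> norm s / \<delta>" using d by simp
    qed
    finally show "norm (p - z powr (-s)) \<le> B" .
  qed auto
  also have "norm (of_real (a + 1) - (of_real a :: complex)) = 1" by simp
  also have "\<phi> (of_real (a + 1)) - \<phi> (of_real a) = tn s n"
  proof -
    have e1: "(of_real (a + 1) :: complex) = of_nat (Suc (Suc n))" by (simp add: a_def)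
    have e2: "(of_real a :: complex) = of_nat (Suc n)" by (simp add: a_def)
    have e3: "(of_nat (Suc (Suc n)) :: complex) = of_nat (Suc n) + 1" by simp
    show ?thesis unfolding \<phi>_def tn_def e1 e2 p_def[symmetric]
      by (rule alg_tn[OF s1 e3])
  qed
  finally show ?thesis unfolding B_def a_def by simp
qed

definition Zc :: "complex \<Rightarrow> complex" where
  "Zc s = 1 / (s - 1) + (\<Sum>n. tn s n)"

lemma Zc_eq_zeta:
  assumes s: "Re s > 1"
  shows "Zc s = zeta s"
proof -
  define c where "c = (\<lambda>n. (of_nat (Suc n) :: complex) powr (1 - s))"
  have "c \<longlonglongrightarrow> 0" unfolding c_def
    by (rule tendsto_neg_powr_complex_of_nat[OF filterlim_Suc]) (use s in simp)
  then have "(\<lambda>n. c n - c (Suc n)) sums (c 0 - 0)" by (rule telescope_sums')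
  then have t: "(\<lambda>n. (c n - c (Suc n)) / (s - 1)) sums (1 / (s - 1))"
    using sums_divide by (fastforce simp: c_def)
  have "summable (\<lambda>n. pw s (Suc n))"
    by (rule summable_norm_cancel) (use summable_iff_shift[of "\<lambda>n. norm (pw s n)" 1] pw_norm_summable_all[OF s] in simp)
  then have z: "(\<lambda>n. pw s (Suc n)) sums zeta s" unfolding zeta_def pw_def by (rule summable_sums)
  have "(\<lambda>n. tn s n) sums (zeta s - 1 / (s - 1))"
    unfolding tn_def using sums_diff[OF z t] by (simp add: c_def)
  then show ?thesis unfolding Zc_def by (simp add: sums_unique[symmetric])
qed

lemma tn_holo: "(\<lambda>s. tn s n) holomorphic_on Omega_half"
  unfolding tn_def using one_notin_Omega
  by (intro holomorphic_intros) auto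

lemma Zc_holo: "Zc holomorphic_on Omega_half"
proof -
  have "(\<lambda>s. \<Sum>n. tn s n) holomorphic_on Omega_half"
  proof (rule holo_series[OF open_Omega tn_holo])
    fix z assume zO: "z \<in> Omega_half"
    then have z: "Re z > 0" using Omega_sub by auto
    obtain d1 where d1: "d1 > 0" "\<And>w. w \<in> cball z d1 \<Longrightarrow> Re w \<ge> (Re z + 0)/2 \<and> norm w \<le> norm z + 1"
      using cball_Re[OF z] by blast
    obtain e where e: "e > 0" "cball z e \<subseteq> Omega_half" using open_Omega zO open_contains_cball by blast
    define d where "d = min d1 e"
    have d: "d > 0" "cball z d \<subseteq> cball z d1" "cball z d \<subseteq> Omega_half" using d1 e by (auto simp: d_def)
    define \<delta> where "\<delta> = Re z / 2"
    have \<delta>: "\<delta> > 0" using z by (simp add: \<delta>_def)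
    define R where "R = norm z + 1"
    define c where "c = (\<lambda>n. real (Suc n) powr (-\<delta>))"
    have "c \<longlonglongrightarrow> 0" unfolding c_def
      by (rule tendsto_neg_powr[OF _ filterlim_compose[OF filterlim_real_sequentially filterlim_Suc]]) (use \<delta> in simp)
    then have "summable (\<lambda>n. c n - c (Suc n))" by (rule telescope_summable')
    then have "summable (\<lambda>n. R / \<delta> * (c n - c (Suc n)))" by (rule summable_mult)
    moreover have "norm (tn w n) \<le> R / \<delta> * (c n - c (Suc n))" if w: "w \<in> cball z d" for n w
    proof -
      have w1: "Re w \<ge> \<delta>" "norm w \<le> R" using d1(2)[of w] d(2) w by (auto simp: \<delta>_def R_def)
      have w2: "w \<noteq> 1" using d(3) w one_notin_Omega by auto
      have "norm (tn w n) \<le> norm w / \<delta> * (c n - c (Suc n))"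
        unfolding c_def by (rule tn_bound[OF \<delta> w1(1) w2])
      also have "\<dots> \<le> R / \<delta> * (c n - c (Suc n))"
      proof (rule mult_right_mono)
        show "norm w / \<delta> \<le> R / \<delta>" using w1 \<delta> by (simp add: divide_right_mono)
        show "0 \<le> c n - c (Suc n)" unfolding c_def using \<delta> by (simp add: powr_mono2')
      qed
      finally show ?thesis .
    qed
    ultimately show "\<exists>d>0. \<exists>M. summable M \<and> (\<forall>n. \<forall>w\<in>cball z d. norm (tn w n) \<le> M n)"
      using d(1) by blast
  qed
  then show ?thesis unfolding Zc_def[abs_def] using one_notin_Omega
    by (intro holomorphic_intros) auto
qed



lemma Ak_holo_O: "k \<ge> 1 \<Longrightarrow> Ak k holomorphic_on Omega_half"
  by (rule holomorphic_on_subset[OF Ak_holo]) (use Omega_sub in auto)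

lemma zeta_exp: "Re s > 1 \<Longrightarrow> zeta s = exp (eta1 s + Ak 1 s)"
  using zeta_euler[of s] zetak_Ak[of s 1] by simp

lemma ext_to_zetak:
  assumes k: "k \<ge> 1" and E: "extends_analytic eta1 Omega_half"
  shows "extends_analytic_nonzero (zetak k) Omega_half"
proof -
  obtain g where g: "g holomorphic_on Omega_half" "\<And>s. Re s > 1 \<Longrightarrow> g s = eta1 s"
    using E unfolding extends_analytic_def by blast
  define h where "h = (\<lambda>s. exp ((g s + Ak k s) / of_nat k))"
  have "h holomorphic_on Omega_half" unfolding h_def
    by (intro holomorphic_intros g(1) Ak_holo_O k) (use k in auto)
  moreover have "h s = zetak k s" if "Re s > 1" for s
    unfolding h_def using g(2)[OF that] zetak_Ak[OF that k] by simp
  moreover have "h s \<noteq> 0" for s unfolding h_def by simp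
  ultimately show ?thesis unfolding extends_analytic_nonzero_def by blast
qed

lemma exp_one_const:
  assumes hol: "D holomorphic_on {s. Re s > 1}" and e: "\<And>s. Re s > 1 \<Longrightarrow> exp (D s) = 1"
  shows "\<exists>c. \<forall>s. Re s > 1 \<longrightarrow> D s = c"
proof -
  let ?U = "{s::complex. Re s > 1}"
  have "\<exists>c. \<forall>x\<in>?U. D x = c"
  proof (rule has_field_derivative_zero_constant)
    show "convex ?U" by (rule convex_halfspace_Re_gt)
    fix x assume x: "x \<in> ?U"
    have dD: "(D has_field_derivative deriv D x) (at x)"
      by (rule holomorphic_derivI[OF hol open_Re_gt x])
    have d1: "((\<lambda>s. exp (D s)) has_field_derivative (exp (D x) * deriv D x)) (at x)"
      by (rule DERIV_chain2[OF DERIV_exp dD])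
    have "((\<lambda>s. 1) has_field_derivative 0) (at x)" by simp
    then have d2: "((\<lambda>s. exp (D s)) has_field_derivative 0) (at x)"
      by (rule has_field_derivative_transform_within_open[OF _ open_Re_gt x]) (use e in auto)
    have "exp (D x) * deriv D x = 0" by (rule DERIV_unique[OF d1 d2])
    then have "deriv D x = 0" by simp
    with dD show "(D has_field_derivative 0) (at x within ?U)"
      by (simp add: has_field_derivative_at_within)
  qed
  then show ?thesis by auto
qed

lemma zetak_to_ext:
  assumes k: "k \<ge> 1" and Z: "extends_analytic_nonzero (zetak k) Omega_half"
  shows "extends_analytic eta1 Omega_half"
proof -
  obtain g where g: "g holomorphic_on Omega_half" "\<And>s. Re s > 1 \<Longrightarrow> g s = zetak k s" "\<And>s. s \<in> Omega_half \<Longrightarrow> g s \<noteq> 0"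
    using Z unfolding extends_analytic_nonzero_def by blast
  obtain L where L: "L holomorphic_on Omega_half" "\<And>z. z \<in> Omega_half \<Longrightarrow> g z = exp (L z)"
    using simply_connected_Omega g(1,3) unfolding simply_connected_eq_holomorphic_log[OF open_Omega] by blast
  define D where "D = (\<lambda>s. L s - (eta1 s + Ak k s) / of_nat k)"
  have "D holomorphic_on {s. Re s > 1}" unfolding D_def
    by (intro holomorphic_intros holomorphic_on_subset[OF L(1) Omega_sup] eta1_holo
          holomorphic_on_subset[OF Ak_holo[OF k]]) (use k in auto)
  moreover have "exp (D s) = 1" if s: "Re s > 1" for s
  proof -
    have "exp (L s) = exp ((eta1 s + Ak k s) / of_nat k)"
      using L(2)[OF Omega_Re_gt1[OF s]] g(2)[OF s] zetak_Ak[OF s k] by simp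
    then show ?thesis unfolding D_def by (simp add: exp_diff)
  qed
  ultimately obtain c where c: "\<And>s. Re s > 1 \<Longrightarrow> D s = c" using exp_one_const by blast
  define h where "h = (\<lambda>s. of_nat k * (L s - c) - Ak k s)"
  have "h holomorphic_on Omega_half" unfolding h_def
    by (intro holomorphic_intros L(1) Ak_holo_O k)
  moreover have "h s = eta1 s" if s: "Re s > 1" for s
  proof -
    have cc: "c = L s - (eta1 s + Ak k s) / of_nat k" using c[OF s] unfolding D_def by (rule sym)
    have "L s - c = (eta1 s + Ak k s) / of_nat k" unfolding cc by (simp add: algebra_simps)
    then show ?thesis unfolding h_def using k by (simp add: field_simps)
  qed
  ultimately show ?thesis unfolding extends_analytic_def by blast
qed

lemma eta1_2_nonzero: "eta1 2 \<noteq> 0"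
proof -
  have s: "Re (2::complex) > 1" by simp
  have sm: "summable (\<lambda>j. pw 2 (pr j))"
    using summable_norm_cancel[OF pw_norm_summable[OF s, of 1]] by simp
  have re: "Re (pw 2 (pr j)) > 0" for j
  proof -
    have p: "real (pr j) > 0" using pr_ge1[of j] by linarith
    have "pw 2 (pr j) = exp (-2 * of_real (ln (real (pr j))))"
      unfolding pw_eq_real by (rule of_real_powr_eq[OF p])
    also have "\<dots> = of_real (exp (-2 * ln (real (pr j))))" by (simp flip: exp_of_real)
    finally show ?thesis by simp
  qed
  have "Re (eta1 2) = (\<Sum>j. Re (pw 2 (pr j)))" using eta1_series[OF s] Re_suminf[OF sm] by simp
  also have "\<dots> > 0" by (rule suminf_pos) (use summable_Re[OF sm] re in auto)
  finally show ?thesis by auto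
qed



lemma alg_main:
  fixes G dG N Q e :: complex
  assumes a: "G \<noteq> 0" "n \<ge> 1" "dG^n = N * G^(n-1) * Q^n"
  shows "(e * dG / G)^n * G = N * (e*Q)^n"
proof -
  obtain n' where n: "n = Suc n'" using a(2) by (cases n) auto
  have "(e * dG / G)^n * G = e^n * dG^n / G^n' " using a(1) unfolding n by (simp add: power_mult_distrib power_divide)
  also have "\<dots> = N * (e*Q)^n" using a(1,3) unfolding n by (simp add: power_mult_distrib)
  finally show ?thesis .
qed

lemma neq_at: "eventually (\<lambda>w. w \<noteq> z) (at (z::complex))"
  by (simp add: eventually_at_filter)

lemma powi_contra:
  fixes Lf Rf :: "complex \<Rightarrow> complex" and z :: complex and k :: int
  assumes cL: "isCont Lf z" and cR: "isCont Rf z" and R0: "Rf z \<noteq> 0"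
    and ev: "eventually (\<lambda>w. Lf w * (w - z) powi k = Rf w) (at z)"
    and k0: "k = 0 \<Longrightarrow> Lf z = 0" and kn: "k < 0 \<Longrightarrow> Lf z \<noteq> 0"
  shows False
proof -
  have nb: "at z \<noteq> bot" by simp
  have tR: "(Rf \<longlongrightarrow> Rf z) (at z)" using cR by (simp add: isCont_def)
  have tL: "(Lf \<longlongrightarrow> Lf z) (at z)" using cL by (simp add: isCont_def)
  consider "k > 0" | "k = 0" | "k < 0" by linarith
  then show False
  proof cases
    case 1
    define a where "a = nat k"
    have a: "a > 0" "k = int a" using 1 by (auto simp: a_def)
    have T: "((\<lambda>w. Lf w * (w - z) ^ a) \<longlongrightarrow> Lf z * (z - z) ^ a) (at z)"
      by (intro tendsto_intros tL)
    have E: "Lf z * (z - z) ^ a = 0" using a by (simp add: zero_power)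
    have "((\<lambda>w. Lf w * (w - z) ^ a) \<longlongrightarrow> 0) (at z)" using T unfolding E .
    moreover have "eventually (\<lambda>w. Lf w * (w - z) ^ a = Rf w) (at z)"
      using ev unfolding a(2) by (simp add: power_int_of_nat)
    ultimately have "(Rf \<longlongrightarrow> 0) (at z)" by (rule Lim_transform_eventually)
    then have "Rf z = 0" using tR tendsto_unique[OF nb] by blast
    with R0 show False ..
  next
    case 2
    have "eventually (\<lambda>w. Lf w = Rf w) (at z)" using ev 2 by simp
    then have "(Rf \<longlongrightarrow> Lf z) (at z)" using tL Lim_transform_eventually by blast
    then have "Lf z = Rf z" using tR tendsto_unique[OF nb] by blast
    then show False using k0[OF 2] R0 by simp
  next
    case 3
    define b where "b = nat (-k)"
    have b: "k = - int b" "b > 0" using 3 by (auto simp: b_def)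
    have "eventually (\<lambda>w. Rf w * (w - z) ^ b = Lf w) (at z)"
      using ev neq_at[of z]
    proof eventually_elim
      case (elim w)
      have "(w - z) powi k = inverse ((w - z) ^ b)" unfolding b(1) by (simp add: power_int_minus power_int_of_nat)
      moreover have "(w - z) ^ b \<noteq> 0" using elim(2) by simp
      ultimately show ?case using elim(1) by (simp add: field_simps)
    qed
    moreover have "((\<lambda>w. Rf w * (w - z) ^ b) \<longlongrightarrow> Rf z * (z - z) ^ b) (at z)"
      by (intro tendsto_intros tR)
    ultimately have "(Lf \<longlongrightarrow> Rf z * (z - z) ^ b) (at z)" using Lim_transform_eventually by blast
    then have "Lf z = Rf z * (z - z) ^ b" using tL tendsto_unique[OF nb] by blast
    then have "Lf z = 0" using b by (simp add: zero_power)
    then show False using kn[OF 3] by simp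
  qed
qed



lemma isCont_holo: "f holomorphic_on S \<Longrightarrow> open S \<Longrightarrow> x \<in> S \<Longrightarrow> isCont f x"
  using holomorphic_on_imp_continuous_on continuous_on_eq_continuous_at by blast

lemma isCont_deriv_holo: "f holomorphic_on S \<Longrightarrow> open S \<Longrightarrow> x \<in> S \<Longrightarrow> isCont (deriv f) x"
  by (rule isCont_holo[OF holomorphic_deriv])

lemma mero_to_zeta:
  assumes n: "n \<ge> 1" and Gm: "extends_meromorphic (\<lambda>s. eta1 s ^ n) Omega_half"
  shows "extends_analytic_nonzero zeta Omega_half"
proof -
  obtain G where G: "G meromorphic_on Omega_half" "\<And>s. Re s > 1 \<Longrightarrow> G s = eta1 s ^ n"
    using Gm unfolding extends_meromorphic_def by blast
  define A where "A = Ak 1"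
  have Ahol: "A holomorphic_on Omega_half" unfolding A_def by (rule Ak_holo_O) simp
  have Zhol: "Zc holomorphic_on Omega_half" by (rule Zc_holo)
  have ZU: "Zc s = exp (eta1 s + A s)" if "Re s > 1" for s
    using Zc_eq_zeta[OF that] zeta_exp[OF that] by (simp add: A_def)
  have eta_hol: "eta1 holomorphic_on {s. Re s > 1}" by (rule eta1_holo)
  have two: "(2::complex) \<in> Omega_half" by (rule Omega_Re_gt1) simp
  have nz: "Zc s0 \<noteq> 0" if s0: "s0 \<in> Omega_half" for s0
  proof
    assume Z0: "Zc s0 = 0"
    define Q where "Q = (\<lambda>s. deriv Zc s / Zc s - deriv A s)"
    define F where "F = (\<lambda>s. deriv G s ^ n - of_nat n ^ n * G s ^ (n - 1) * Q s ^ n)"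
    have Zan: "Zc analytic_on Omega_half" using Zhol open_Omega analytic_on_open by blast
    have Aan: "A analytic_on Omega_half" using Ahol open_Omega analytic_on_open by blast
    have Fm: "F meromorphic_on Omega_half" unfolding F_def Q_def
      by (intro meromorphic_intros meromorphic_on_deriv G(1) analytic_on_imp_meromorphic_on Zan Aan)
    have F0: "F s = 0" if s: "Re s > 1" for s
    proof -
      have sU: "s \<in> {s. Re s > 1}" using s by simp
      have ev: "eventually (\<lambda>x. x \<in> {s. Re s > 1}) (nhds s)"
        by (rule eventually_nhds_in_open[OF open_Re_gt sU])
      have d\<eta>: "(eta1 has_field_derivative deriv eta1 s) (at s)"
        by (rule holomorphic_derivI[OF eta_hol open_Re_gt sU])
      have dA: "(A has_field_derivative deriv A s) (at s)"
        by (rule holomorphic_derivI[OF Ahol open_Omega Omega_Re_gt1[OF s]])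
      have "deriv G s = deriv (\<lambda>x. eta1 x ^ n) s"
        by (rule deriv_cong_ev) (use ev G(2) in \<open>auto elim!: eventually_mono\<close>)
      also have "\<dots> = of_nat n * (deriv eta1 s * eta1 s ^ (n - Suc 0))"
        by (rule DERIV_imp_deriv[OF DERIV_power[OF d\<eta>]])
      finally have dG: "deriv G s = of_nat n * (deriv eta1 s * eta1 s ^ (n - 1))" by simp
      have "deriv Zc s = deriv (\<lambda>x. exp (eta1 x + A x)) s"
        by (rule deriv_cong_ev) (use ev ZU in \<open>auto elim!: eventually_mono\<close>)
      also have "\<dots> = exp (eta1 s + A s) * (deriv eta1 s + deriv A s)"
        by (rule DERIV_imp_deriv, rule DERIV_chain2[OF DERIV_exp DERIV_add[OF d\<eta> dA]])
      finally have dZ: "deriv Zc s = exp (eta1 s + A s) * (deriv eta1 s + deriv A s)" .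
      have Qs: "Q s = deriv eta1 s" unfolding Q_def dZ ZU[OF s] by simp
      have pe: "(eta1 s ^ (n - Suc 0)) ^ n = (eta1 s ^ n) ^ (n - Suc 0)"
        by (simp add: power_mult[symmetric] mult.commute)
      show "F s = 0" unfolding F_def dG G(2)[OF s] Qs
        by (simp add: power_mult_distrib pe)
    qed
    have nb2: "at (2::complex) \<noteq> bot" by simp
    have evF2: "eventually (\<lambda>s. F s = 0) (at 2)"
      using eventually_at_in_open'[OF open_Re_gt, of 2 1] by (auto elim!: eventually_mono intro: F0)
    have "eventually (\<lambda>s. F s = 0) (cosparse Omega_half)"
    proof -
      from meromorphic_imp_constant_or_avoid[OF Fm open_Omega connected_Omega, of 0]
      consider "eventually (\<lambda>s. F s = 0) (cosparse Omega_half)" | "eventually (\<lambda>s. F s \<noteq> 0) (cosparse Omega_half)" by blast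
      then show ?thesis
      proof cases
        case 2
        then have "eventually (\<lambda>s. F s \<noteq> 0) (at 2)"
          using eventually_cosparse_open_eq[OF open_Omega] two by auto
        with evF2 have "eventually (\<lambda>s. False) (at (2::complex))" by eventually_elim auto
        then show ?thesis using nb2 by simp
      qed auto
    qed
    then have evF: "eventually (\<lambda>s. F s = 0) (at s0)"
      using eventually_cosparse_open_eq[OF open_Omega] s0 by auto
    have evG2: "eventually (\<lambda>s. G s \<noteq> 0) (at 2)"
    proof -
      have "isCont eta1 2" by (rule isCont_holo[OF eta_hol open_Re_gt]) simp
      then have "(eta1 \<longlongrightarrow> eta1 2) (at 2)" by (simp add: isCont_def)
      then have "eventually (\<lambda>s. eta1 s \<noteq> 0) (at 2)" by (rule tendsto_imp_eventually_ne) (rule eta1_2_nonzero)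
      moreover have "eventually (\<lambda>s. s \<in> {s. Re s > 1}) (at (2::complex))"
        by (rule eventually_at_in_open'[OF open_Re_gt]) simp
      ultimately show ?thesis by eventually_elim (auto simp: G(2))
    qed
    have "eventually (\<lambda>s. G s \<noteq> 0) (cosparse Omega_half)"
    proof -
      from meromorphic_imp_constant_or_avoid[OF G(1) open_Omega connected_Omega, of 0]
      consider "eventually (\<lambda>s. G s = 0) (cosparse Omega_half)" | "eventually (\<lambda>s. G s \<noteq> 0) (cosparse Omega_half)" by blast
      then show ?thesis
      proof cases
        case 1
        then have "eventually (\<lambda>s. G s = 0) (at 2)"
          using eventually_cosparse_open_eq[OF open_Omega] two by auto
        with evG2 have "eventually (\<lambda>s. False) (at (2::complex))" by eventually_elim auto
        then show ?thesis using nb2 by simp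
      qed auto
    qed
    then have evG: "eventually (\<lambda>s. G s \<noteq> 0) (at s0)"
      using eventually_cosparse_open_eq[OF open_Omega] s0 by auto
    have freqG: "frequently (\<lambda>s. G s \<noteq> 0) (at s0)"
      by (rule eventually_frequently[OF _ evG]) simp
    have nconst: "\<not> Zc constant_on Omega_half"
    proof
      assume "Zc constant_on Omega_half"
      then obtain c where "\<forall>x\<in>Omega_half. Zc x = c" by (auto simp: constant_on_def)
      then have "Zc 2 = Zc s0" using s0 two by auto
      moreover have "Zc 2 \<noteq> 0" using ZU[of 2] by simp
      ultimately show False using Z0 by simp
    qed
    obtain u r m where um: "0 < m" "0 < r" "ball s0 r \<subseteq> Omega_half" "u holomorphic_on ball s0 r"
      "\<And>w. w \<in> ball s0 r \<Longrightarrow> Zc w = (w - s0) ^ m * u w" "\<And>w. w \<in> ball s0 r \<Longrightarrow> u w \<noteq> 0"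
      by (rule holomorphic_factor_zero_nonconstant[OF Zhol open_Omega connected_Omega s0 Z0 nconst]) (rule that, assumption+)
    have Gs0: "G meromorphic_on {s0}" by (rule meromorphic_on_subset[OF G(1)]) (use s0 in simp)
    define k where "k = zorder G s0"
    define g where "g = zor_poly G s0"
    have ze: "g s0 \<noteq> 0 \<and> (\<exists>r. r > 0 \<and> g holomorphic_on cball s0 r
        \<and> (\<forall>w\<in>cball s0 r - {s0}. G w = g w * (w - s0) powi k \<and> g w \<noteq> 0))"
      unfolding k_def g_def
      by (rule zorder_exist[OF meromorphic_on_isolated_singularity[OF Gs0] meromorphic_on_not_essential[OF Gs0] freqG])
    then have g1: "g s0 \<noteq> 0" by (rule conjunct1)
    from ze obtain r' where g2: "r' > 0" "g holomorphic_on cball s0 r'"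
      "\<forall>w\<in>cball s0 r' - {s0}. G w = g w * (w - s0) powi k \<and> g w \<noteq> 0" by (elim conjE exE) (rule that)
    have g: "g s0 \<noteq> 0" "r' > 0" "g holomorphic_on cball s0 r'"
      "\<And>w. w \<in> cball s0 r' - {s0} \<Longrightarrow> G w = g w * (w - s0) powi k \<and> g w \<noteq> 0"
      using g1 g2 by auto
    define \<rho> where "\<rho> = min r r'"
    define B where "B = ball s0 \<rho>"
    have B: "open B" "s0 \<in> B" "B \<subseteq> ball s0 r" "B \<subseteq> cball s0 r'" "B \<subseteq> Omega_half"
      using um g unfolding B_def \<rho>_def by auto
    have ghol: "g holomorphic_on B" using g(3) B(4) by (rule holomorphic_on_subset)
    have uhol: "u holomorphic_on B" using um(4) B(3) by (rule holomorphic_on_subset)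
    have AholB: "A holomorphic_on B" using Ahol B(5) by (rule holomorphic_on_subset)
    define W where "W = (\<lambda>w. (w - s0) * deriv g w / g w + of_int k)"
    define X where "X = (\<lambda>w. of_nat m + (w - s0) * (deriv u w / u w - deriv A w))"
    define Lf where "Lf = (\<lambda>w. W w ^ n * g w)"
    define Rf where "Rf = (\<lambda>w. of_nat n ^ n * X w ^ n)"
    have key: "Lf w * (w - s0) powi k = Rf w" if w: "w \<in> B" "w \<noteq> s0" "F w = 0" for w
    proof -
      define e where "e = w - s0"
      have e0: "e \<noteq> 0" using w by (simp add: e_def)
      have wB: "w \<in> B - {s0}" using w by simp
      have oB: "open (B - {s0})" using B(1) by auto
      have evw: "eventually (\<lambda>x. x \<in> B - {s0}) (nhds w)" by (rule eventually_nhds_in_open[OF oB wB])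
      have Geq: "G x = g x * (x - s0) powi k" if "x \<in> B - {s0}" for x using g(4)[of x] that B(4) by auto
      have gw: "g w \<noteq> 0" using g(4)[of w] w B(4) by auto
      have dg: "(g has_field_derivative deriv g w) (at w)" by (rule holomorphic_derivI[OF ghol B(1) w(1)])
      have dp: "((\<lambda>x. (x - s0) powi k) has_field_derivative (of_int k * (w - s0) powi (k - 1) * 1)) (at w)"
        by (rule DERIV_power_int) (use w(2) in \<open>auto intro!: derivative_eq_intros\<close>)
      have "deriv G w = deriv (\<lambda>x. g x * (x - s0) powi k) w"
        by (rule deriv_cong_ev) (use evw Geq in \<open>auto elim!: eventually_mono\<close>)
      also have "\<dots> = deriv g w * (w - s0) powi k + of_int k * (w - s0) powi (k - 1) * 1 * g w"
        by (rule DERIV_imp_deriv[OF DERIV_mult[OF dg dp]])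
      finally have dG: "deriv G w = deriv g w * e powi k + of_int k * e powi (k - 1) * g w" by (simp add: e_def)
      have ek: "e powi k = e powi (k - 1) * e" using power_int_add[of e "k - 1" 1] e0 by simp
      have Gw: "G w = g w * e powi k" using Geq[OF wB] by (simp add: e_def)
      have Gnz: "G w \<noteq> 0" using Gw gw e0 by simp
      have WG: "e * deriv G w / G w = W w"
        unfolding W_def dG Gw e_def[symmetric] using e0 gw ek by (simp add: field_simps)
      have du: "(u has_field_derivative deriv u w) (at w)" by (rule holomorphic_derivI[OF uhol B(1) w(1)])
      have uw: "u w \<noteq> 0" using um(6) B(3) w(1) by auto
      have evw2: "eventually (\<lambda>x. x \<in> B) (nhds w)" by (rule eventually_nhds_in_open[OF B(1) w(1)])
      have dpow: "((\<lambda>x. (x - s0) ^ m) has_field_derivative (of_nat m * (w - s0) ^ (m - 1))) (at w)"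
        by (auto intro!: derivative_eq_intros)
      have "deriv Zc w = deriv (\<lambda>x. (x - s0) ^ m * u x) w"
        by (rule deriv_cong_ev) (use evw2 um(5) B(3) in \<open>auto elim!: eventually_mono\<close>)
      also have "\<dots> = of_nat m * (w - s0) ^ (m - 1) * u w + deriv u w * (w - s0) ^ m"
        by (rule DERIV_imp_deriv[OF DERIV_mult[OF dpow du]])
      finally have dZ: "deriv Zc w = of_nat m * e ^ (m - 1) * u w + deriv u w * e ^ m" by (simp add: e_def)
      have wr: "w \<in> ball s0 r" using B(3) w(1) by blast
      have Zw: "Zc w = e ^ m * u w" unfolding e_def by (rule um(5)[OF wr])
      have em: "e ^ m = e ^ (m - 1) * e" using um(1) by (cases m) auto
      have XQ: "e * Q w = X w"
        unfolding Q_def X_def dZ Zw e_def[symmetric] using e0 uw em by (simp add: field_simps)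
      have Fw: "deriv G w ^ n = of_nat n ^ n * G w ^ (n - 1) * Q w ^ n" using w(3) unfolding F_def by simp
      have "(e * deriv G w / G w) ^ n * G w = of_nat n ^ n * (e * Q w) ^ n"
        by (rule alg_main[OF Gnz n Fw])
      then have h1: "W w ^ n * G w = Rf w" unfolding WG XQ Rf_def .
      then show ?thesis unfolding Lf_def e_def Gw[unfolded e_def] by (simp add: mult.assoc)
    qed
    have evkey: "eventually (\<lambda>w. Lf w * (w - s0) powi k = Rf w) (at s0)"
      using eventually_at_in_open'[OF B(1) B(2)] neq_at[of s0] evF
      by eventually_elim (rule key)
    have cg: "isCont g s0" by (rule isCont_holo[OF ghol B(1,2)])
    have cdg: "isCont (deriv g) s0" by (rule isCont_deriv_holo[OF ghol B(1,2)])
    have cu: "isCont u s0" by (rule isCont_holo[OF uhol B(1,2)])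
    have cdu: "isCont (deriv u) s0" by (rule isCont_deriv_holo[OF uhol B(1,2)])
    have cdA: "isCont (deriv A) s0" by (rule isCont_deriv_holo[OF AholB B(1,2)])
    have us0: "u s0 \<noteq> 0" using um(6) um(2) by simp
    have cL: "isCont Lf s0" unfolding Lf_def W_def
      using cg cdg g(1) by (intro continuous_intros) auto
    have cR: "isCont Rf s0" unfolding Rf_def X_def
      using cu cdu cdA us0 by (intro continuous_intros) auto
    have Rf0: "Rf s0 \<noteq> 0" unfolding Rf_def X_def using n um(1) by simp
    have Lf0: "Lf s0 = of_int k ^ n * g s0" unfolding Lf_def W_def by simp
    show False
    proof (rule powi_contra[OF cL cR Rf0 evkey])
      show "Lf s0 = 0" if "k = 0" using that n unfolding Lf0 by (simp add: zero_power)
      show "Lf s0 \<noteq> 0" if "k < 0" using that g(1) unfolding Lf0 by simp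
    qed
  qed
  show ?thesis unfolding extends_analytic_nonzero_def
    using Zhol Zc_eq_zeta nz by blast
qed



lemma zeta_zetak1_iff: "extends_analytic_nonzero zeta Omega_half \<longleftrightarrow> extends_analytic_nonzero (zetak 1) Omega_half"
  unfolding extends_analytic_nonzero_def using zeta_euler by auto

lemma ext_to_mero:
  assumes E: "extends_analytic eta1 Omega_half"
  shows "extends_meromorphic (\<lambda>s. eta1 s ^ n) Omega_half"
proof -
  obtain g where g: "g holomorphic_on Omega_half" "\<And>s. Re s > 1 \<Longrightarrow> g s = eta1 s"
    using E unfolding extends_analytic_def by blast
  have "(\<lambda>s. g s ^ n) holomorphic_on Omega_half" by (intro holomorphic_intros g(1))
  then have "(\<lambda>s. g s ^ n) analytic_on Omega_half" using open_Omega analytic_on_open by blast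
  then have "(\<lambda>s. g s ^ n) meromorphic_on Omega_half" by (rule analytic_on_imp_meromorphic_on)
  then show ?thesis unfolding extends_meromorphic_def using g(2) by auto
qed

lemma ext_to_mero1:
  assumes E: "extends_analytic eta1 Omega_half"
  shows "extends_meromorphic eta1 Omega_half"
  using ext_to_mero[OF E, of 1] by simp

lemma mero1_to_pow:
  "extends_meromorphic eta1 Omega_half \<Longrightarrow> extends_meromorphic (\<lambda>s. eta1 s ^ 1) Omega_half"
  by simp

lemma mero_to_ext:
  assumes "n \<ge> 1" "extends_meromorphic (\<lambda>s. eta1 s ^ n) Omega_half"
  shows "extends_analytic eta1 Omega_half"
proof -
  have "extends_analytic_nonzero zeta Omega_half" by (rule mero_to_zeta[OF assms])
  then have "extends_analytic_nonzero (zetak 1) Omega_half" using zeta_zetak1_iff by blast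
  then show ?thesis by (rule zetak_to_ext[rotated]) simp
qed

theorem mainTheorem9:
  shows "(extends_analytic eta1 Omega_half \<longleftrightarrow> extends_meromorphic eta1 Omega_half)
    \<and> (extends_analytic eta1 Omega_half \<longleftrightarrow> extends_analytic_nonzero zeta Omega_half)
    \<and> (extends_analytic eta1 Omega_half \<longleftrightarrow>
         (\<exists>i::nat. i \<ge> 2 \<and> extends_analytic_nonzero (zetak i) Omega_half))
    \<and> (extends_analytic eta1 Omega_half \<longleftrightarrow>
         (\<forall>i::nat. i \<ge> 1 \<longrightarrow> extends_analytic_nonzero (zetak i) Omega_half))
    \<and> (extends_analytic eta1 Omega_half \<longleftrightarrow>
         (\<exists>n::nat. n \<ge> 1 \<and> extends_meromorphic (\<lambda>s. eta1 s ^ n) Omega_half))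
    \<and> (extends_analytic eta1 Omega_half \<longleftrightarrow>
         (\<forall>n::nat. n \<ge> 1 \<longrightarrow> extends_meromorphic (\<lambda>s. eta1 s ^ n) Omega_half))"
proof (intro conjI iffI)
  assume E: "extends_analytic eta1 Omega_half"
  show "extends_meromorphic eta1 Omega_half" by (rule ext_to_mero1[OF E])
  show "extends_analytic_nonzero zeta Omega_half" using ext_to_zetak[OF _ E, of 1] zeta_zetak1_iff by simp
  show "\<exists>i::nat. i \<ge> 2 \<and> extends_analytic_nonzero (zetak i) Omega_half"
    using ext_to_zetak[OF _ E, of 2] by auto
  show "\<forall>i::nat. i \<ge> 1 \<longrightarrow> extends_analytic_nonzero (zetak i) Omega_half"
    using ext_to_zetak[OF _ E] by auto
  show "\<exists>n::nat. n \<ge> 1 \<and> extends_meromorphic (\<lambda>s. eta1 s ^ n) Omega_half"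
    using ext_to_mero[OF E, of 1] by auto
  show "\<forall>n::nat. n \<ge> 1 \<longrightarrow> extends_meromorphic (\<lambda>s. eta1 s ^ n) Omega_half"
    using ext_to_mero[OF E] by auto
next
  assume "extends_meromorphic eta1 Omega_half"
  then show "extends_analytic eta1 Omega_half" using mero_to_ext[of 1] by simp
next
  assume "extends_analytic_nonzero zeta Omega_half"
  then show "extends_analytic eta1 Omega_half" using zeta_zetak1_iff zetak_to_ext[of 1] by simp
next
  assume "\<exists>i::nat. i \<ge> 2 \<and> extends_analytic_nonzero (zetak i) Omega_half"
  then obtain i where "i \<ge> 2" "extends_analytic_nonzero (zetak i) Omega_half" by blast
  then show "extends_analytic eta1 Omega_half" using zetak_to_ext[of i] by simp
next
  assume "\<forall>i::nat. i \<ge> 1 \<longrightarrow> extends_analytic_nonzero (zetak i) Omega_half"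
  then show "extends_analytic eta1 Omega_half" using zetak_to_ext[of 1] by simp
next
  assume "\<exists>n::nat. n \<ge> 1 \<and> extends_meromorphic (\<lambda>s. eta1 s ^ n) Omega_half"
  then show "extends_analytic eta1 Omega_half" using mero_to_ext by blast
next
  assume "\<forall>n::nat. n \<ge> 1 \<longrightarrow> extends_meromorphic (\<lambda>s. eta1 s ^ n) Omega_half"
  then have "extends_meromorphic (\<lambda>s. eta1 s ^ 1) Omega_half" by blast
  then show "extends_analytic eta1 Omega_half" by (rule mero_to_ext[rotated]) simp
qed

end
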